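(* Let $A$ be an Archimedean semiprime $f$-algebra and $a\in A$. Then $a^2\le\mu|a|$ for some $\mu\in(0,\infty)$ if and only if for every $x\in A$ there is $\lambda\in(0,\infty)$ with $|ax|\le\lambda|x|$ (i.e., $ax\in A(x)$ for all $x\in A$).
   Context: An $f$-algebra is a real associative algebra that is a vector lattice with $A_+A_+\subseteq A_+$ and such that $a\wedge b=0$ implies $ac\wedge b=ca\wedge b=0$ for all $c\in A_+$; it is semiprime if $0$ is its only nilpotent element. For $x\in A$, $A(x)=\{y\in A: |y|\le\lambda|x|\text{ for some }\lambda\in(0,\infty)\}$. Elements $a$ with $a^2\in A(a)$ are called bounded. *)

theory Defs
  imports Complex_Main
begin

text \<open>A real vector lattice that is also a real (associative, not necessarily unital)
algebra is modelled by the type class combination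
real_algebra + ordered_real_vector + lattice.\<close>

definition labs :: "'a::{ordered_real_vector, lattice} \<Rightarrow> 'a" where
  "labs x = sup x (- x)"

definition archimedean_vl :: "'a::{ordered_real_vector, lattice} itself \<Rightarrow> bool" where
  "archimedean_vl TYPE('a) \<longleftrightarrow>
     (\<forall>x y :: 'a. 0 \<le> x \<and> 0 \<le> y \<and> (\<forall>n::nat. real n *\<^sub>R x \<le> y) \<longrightarrow> x = 0)"

definition f_algebra :: "'a::{real_algebra, ordered_real_vector, lattice} itself \<Rightarrow> bool" where
  "f_algebra TYPE('a) \<longleftrightarrow>
     (\<forall>x y :: 'a. 0 \<le> x \<and> 0 \<le> y \<longrightarrow> 0 \<le> x * y) \<and>
     (\<forall>a b c :: 'a. inf a b = 0 \<and> 0 \<le> c \<longrightarrow> inf (a * c) b = 0 \<and> inf (c * a) b = 0)"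

text \<open>Positive powers in a possibly non-unital algebra: npow x n = x^(n+1).\<close>
fun npow :: "'a::times \<Rightarrow> nat \<Rightarrow> 'a" where
  "npow x 0 = x"
| "npow x (Suc n) = x * npow x n"

definition semiprime :: "'a::{real_algebra} itself \<Rightarrow> bool" where
  "semiprime TYPE('a) \<longleftrightarrow> (\<forall>x :: 'a. (\<exists>n. npow x n = 0) \<longrightarrow> x = 0)"

end

theory Submission
  imports Defs
begin


lemma add_sup_l: fixes c :: "'a::{ordered_ab_group_add, lattice}"
  shows "c + sup a b = sup (c + a) (c + b)"
proof (rule antisym)
  have "a \<le> sup (c + a) (c + b) - c" "b \<le> sup (c + a) (c + b) - c"
    by (simp_all add: le_diff_eq add.commute)
  then have "sup a b \<le> sup (c + a) (c + b) - c" by simp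
  then show "c + sup a b \<le> sup (c + a) (c + b)" by (metis le_diff_eq add.commute)
  show "sup (c + a) (c + b) \<le> c + sup a b" by (simp add: add_left_mono)
qed

lemma add_inf_l: fixes c :: "'a::{ordered_ab_group_add, lattice}"
  shows "c + inf a b = inf (c + a) (c + b)"
proof (rule antisym)
  have "inf (c + a) (c + b) - c \<le> a" "inf (c + a) (c + b) - c \<le> b"
    by (simp_all add: diff_le_eq add.commute le_infI1 le_infI2)
  then have "inf (c + a) (c + b) - c \<le> inf a b" by simp
  then show "inf (c + a) (c + b) \<le> c + inf a b" by (metis diff_le_eq add.commute)
  show "c + inf a b \<le> inf (c + a) (c + b)" by (simp add: add_left_mono)
qed

lemma neg_sup: fixes a b :: "'a::{ordered_ab_group_add, lattice}"
  shows "- sup a b = inf (-a) (-b)"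
proof (rule antisym)
  show "- sup a b \<le> inf (- a) (- b)" by simp
  have "- inf (-a) (-b) \<ge> a" "- inf (-a) (-b) \<ge> b"
    by (metis le_minus_iff inf_le1, metis le_minus_iff inf_le2)
  then have "sup a b \<le> - inf (-a) (-b)" by simp
  then show "inf (- a) (- b) \<le> - sup a b" by (simp add: le_minus_iff)
qed

lemma pos_neg: fixes x :: "'a::{ordered_ab_group_add, lattice}"
  shows "sup x 0 = x + sup (-x) 0"
  using add_sup_l[of x "-x" 0] by (simp add: sup_commute)

lemma pos_neg_disj: fixes x :: "'a::{ordered_ab_group_add, lattice}"
  shows "inf (sup x 0) (sup (-x) 0) = 0"
proof -
  have e: "sup x 0 = sup (-x) 0 + x" using pos_neg[of x] by (simp only: add.commute)
  have "inf (sup x 0) (sup (-x) 0) = inf (sup (-x) 0 + x) (sup (-x) 0 + 0)"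
    by (simp only: e add_0_right)
  also have "\<dots> = sup (-x) 0 + inf x 0" by (simp only: add_inf_l)
  also have "inf x 0 = - sup (-x) 0" using neg_sup[of "-x" 0] by (simp only: minus_minus minus_zero)
  finally show ?thesis by (simp only: add.right_inverse)
qed

lemma mult_left_mono_pos: fixes c :: "'a::{real_algebra, ordered_real_vector, lattice}"
  assumes fa: "\<forall>x y :: 'a. 0 \<le> x \<and> 0 \<le> y \<longrightarrow> 0 \<le> x * y"
    and "0 \<le> c" "a \<le> b" shows "c * a \<le> c * b" "a * c \<le> b * c"
proof -
  have "0 \<le> c * (b - a)" "0 \<le> (b - a) * c" using fa assms by simp_all
  then show "c * a \<le> c * b" "a * c \<le> b * c" by (simp_all add: algebra_simps)
qed



lemma key:
  fixes u v :: "'a::{real_algebra, ordered_real_vector, lattice}"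
  assumes fa: "f_algebra TYPE('a)" and sp: "semiprime TYPE('a)"
    and u0: "0 \<le> u" and v0: "0 \<le> v" and m0: "0 \<le> m"
    and uu: "u * u \<le> m *\<^sub>R u"
  shows "u * v \<le> m *\<^sub>R v"
proof -
  have ax: "\<And>a b c :: 'a. inf a b = 0 \<Longrightarrow> 0 \<le> c \<Longrightarrow> inf (a * c) b = 0 \<and> inf (c * a) b = 0"
    using fa unfolding f_algebra_def by blast
  have pm: "\<forall>x y :: 'a. 0 \<le> x \<and> 0 \<le> y \<longrightarrow> 0 \<le> x * y"
    using fa unfolding f_algebra_def by blast
  define z where "z = u * v - m *\<^sub>R v"
  define p where "p = sup z 0"
  define n where "n = sup (-z) 0"
  have zpn: "z = p - n" unfolding p_def n_def using pos_neg[of z] by (metis add_diff_cancel_right')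
  have pn: "inf p n = 0" unfolding p_def n_def by (rule pos_neg_disj)
  have p0: "0 \<le> p" and n0: "0 \<le> n" unfolding p_def n_def by (rule sup_ge2)+
  have "u * (u * v) = (u * u) * v" by (rule mult.assoc[symmetric])
  also have "\<dots> \<le> (m *\<^sub>R u) * v" by (rule mult_left_mono_pos(2)[OF pm v0 uu])
  also have "\<dots> = m *\<^sub>R (u * v)" by (rule mult_scaleR_left)
  finally have 1: "u * (u * v) \<le> m *\<^sub>R (u * v)" .
  have "u * v = m *\<^sub>R v + z" by (simp add: z_def)
  then have "u * (u * v) = u * (m *\<^sub>R v + (p - n))" by (simp add: zpn)
  also have "\<dots> = m *\<^sub>R (u * v) + (u * p - u * n)"
    by (simp only: distrib_left right_diff_distrib mult_scaleR_right)
  finally have "m *\<^sub>R (u * v) + (u * p - u * n) \<le> m *\<^sub>R (u * v) + 0" using 1 by simp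
  then have "u * p - u * n \<le> 0" by (rule add_le_imp_le_left)
  then have upn: "u * p \<le> u * n" by simp
  have unp: "inf (u * n) p = 0" using ax[of n p u] pn u0 by (simp add: inf_commute)
  have "inf (u * p) p \<le> inf (u * n) p" using upn by (rule inf_mono) simp
  moreover have "0 \<le> inf (u * p) p" using pm u0 p0 by simp
  ultimately have "inf (u * p) p = 0" using unp by simp
  then have "inf p (u * p) = 0" by (simp add: inf_commute)
  then have "inf (u * p) (u * p) = 0" using ax u0 by blast
  then have up: "u * p = 0" by simp
  define w where "w = inf u p"
  have w0: "0 \<le> w" using u0 p0 by (simp add: w_def)
  have "w * w \<le> u * w" by (rule mult_left_mono_pos(2)[OF pm w0]) (simp add: w_def)
  also have "\<dots> \<le> u * p" by (rule mult_left_mono_pos(1)[OF pm u0]) (simp add: w_def)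
  finally have "w * w \<le> 0" using up by simp
  moreover have "0 \<le> w * w" using pm w0 by simp
  ultimately have "npow w 1 = 0" by simp
  then have "w = 0" using sp unfolding semiprime_def by blast
  then have "inf u p = 0" by (simp add: w_def)
  then have "inf (u * v) p = 0" using ax[of u p v] v0 by blast
  moreover have "p \<le> u * v"
  proof -
    have uv0: "0 \<le> u * v" using pm u0 v0 by simp
    have "0 \<le> m *\<^sub>R v" using m0 v0 by (rule scaleR_nonneg_nonneg)
    then have "z \<le> u * v" by (simp add: z_def)
    then show ?thesis using uv0 by (simp add: p_def)
  qed
  ultimately have "p = 0" by (metis inf_absorb2)
  then have "z \<le> 0" unfolding p_def by (metis sup_ge1)
  then show ?thesis unfolding z_def by (simp only: diff_le_0_iff_le)
qed

lemma disj_prod: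
  assumes fa: "f_algebra TYPE('a::{real_algebra, ordered_real_vector, lattice})"
    and d: "inf x y = (0::'a)" shows "x * y = 0"
proof -
  have ax: "\<And>a b c :: 'a. inf a b = 0 \<Longrightarrow> 0 \<le> c \<Longrightarrow> inf (a * c) b = 0 \<and> inf (c * a) b = 0"
    using fa unfolding f_algebra_def by blast
  have x0: "0 \<le> x" "0 \<le> y" using d by (metis inf_le1, metis inf_le2)
  have d': "inf y x = 0" using d by (simp only: inf_commute)
  have "inf (x * y) x = 0" using ax[OF d' x0(1)] by (rule conjunct2)
  then have "inf x (x * y) = 0" by (simp only: inf_commute)
  then have "inf (x * y) (x * y) = 0" using ax[of x "x * y" y] x0(2) by (rule_tac conjunct1) blast
  then show ?thesis by (simp only: inf_idem)
qed

theorem lemma5: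
  fixes a :: "'a::{real_algebra, ordered_real_vector, lattice}"
  assumes "f_algebra TYPE('a)"
    and "archimedean_vl TYPE('a)"
    and "semiprime TYPE('a)"
  shows "(\<exists>\<mu>>0. a * a \<le> \<mu> *\<^sub>R labs a) \<longleftrightarrow>
         (\<forall>x :: 'a. \<exists>l>0. labs (a * x) \<le> l *\<^sub>R labs x)"
proof
  assume "\<forall>x :: 'a. \<exists>l>0. labs (a * x) \<le> l *\<^sub>R labs x"
  then obtain l where "l > 0" "labs (a * a) \<le> l *\<^sub>R labs a" by blast
  moreover have "a * a \<le> labs (a * a)" unfolding labs_def by (rule sup_ge1)
  ultimately show "\<exists>\<mu>>0. a * a \<le> \<mu> *\<^sub>R labs a" using order_trans by blast
next
  assume "\<exists>\<mu>>0. a * a \<le> \<mu> *\<^sub>R labs a"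
  then obtain m where m0: "m > 0" and am: "a * a \<le> m *\<^sub>R labs a" by blast
  have m0': "0 \<le> m" using m0 by simp
  have pm: "\<forall>x y :: 'a. 0 \<le> x \<and> 0 \<le> y \<longrightarrow> 0 \<le> x * y"
    using assms(1) unfolding f_algebra_def by blast
  define ap where "ap = sup a 0"
  define an where "an = sup (-a) 0"
  define U where "U = ap + an"
  have a_eq: "a = ap - an" unfolding ap_def an_def using pos_neg[of a] by (metis add_diff_cancel_right')
  have ap0: "0 \<le> ap" and an0: "0 \<le> an" unfolding ap_def an_def by (rule sup_ge2)+
  have d: "inf ap an = 0" unfolding ap_def an_def by (rule pos_neg_disj)
  have d1: "ap * an = 0" by (rule disj_prod[OF assms(1) d])
  have d2: "an * ap = 0" by (rule disj_prod[OF assms(1)]) (use d in \<open>simp only: inf_commute\<close>)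
  have U0: "0 \<le> U" unfolding U_def using ap0 an0 by (rule add_nonneg_nonneg)
  have "U * U = ap * ap + ap * an + (an * ap + an * an)"
    unfolding U_def by (simp only: distrib_left distrib_right add_ac)
  also have "\<dots> = ap * ap - ap * an - an * ap + an * an" using d1 d2 by simp
  also have "\<dots> = a * a"
    unfolding a_eq by (simp add: algebra_simps)
  also have "\<dots> \<le> m *\<^sub>R labs a" by (rule am)
  also have "\<dots> \<le> m *\<^sub>R U"
  proof (rule scaleR_left_mono)
    have "a \<le> ap" unfolding ap_def by (rule sup_ge1)
    also have "ap \<le> U" unfolding U_def using an0 by (rule add_increasing2) simp
    finally have 1: "a \<le> U" .
    have "-a \<le> an" unfolding an_def by (rule sup_ge1)
    also have "an \<le> U" unfolding U_def using ap0 by (rule add_increasing) simp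
    finally have 2: "-a \<le> U" .
    show "labs a \<le> U" unfolding labs_def using 1 2 by (rule sup_least)
  qed (rule m0')
  finally have UU: "U * U \<le> m *\<^sub>R U" .
  show "\<forall>x :: 'a. \<exists>l>0. labs (a * x) \<le> l *\<^sub>R labs x"
  proof
    fix x :: 'a
    define xp where "xp = sup x 0"
    define xn where "xn = sup (-x) 0"
    define V where "V = xp + xn"
    have x_eq: "x = xp - xn" unfolding xp_def xn_def using pos_neg[of x] by (metis add_diff_cancel_right')
    have xp0: "0 \<le> xp" and xn0: "0 \<le> xn" unfolding xp_def xn_def by (rule sup_ge2)+
    have V0: "0 \<le> V" unfolding V_def using xp0 xn0 by (rule add_nonneg_nonneg)
    have t: "0 \<le> ap * xp" "0 \<le> ap * xn" "0 \<le> an * xp" "0 \<le> an * xn"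
      using pm ap0 an0 xp0 xn0 by blast+
    define c where "c = ap * xn + an * xp"
    have c0: "0 \<le> c" unfolding c_def using t(2,3) by (rule add_nonneg_nonneg)
    have ax: "a * x = ap * xp - ap * xn - an * xp + an * xn"
      unfolding a_eq x_eq by (simp add: algebra_simps)
    have UV: "U * V = ap * xp + ap * xn + an * xp + an * xn"
      unfolding U_def V_def by (simp only: distrib_left distrib_right add_ac)
    have "U * V - a * x = c + c" unfolding UV ax c_def by (simp add: algebra_simps)
    then have "0 \<le> U * V - a * x" using c0 by simp
    then have 1: "a * x \<le> U * V" by simp
    have "U * V + a * x = (ap * xp + an * xn) + (ap * xp + an * xn)" unfolding UV ax by (simp add: algebra_simps)
    then have "0 \<le> U * V + a * x" using t(1,4) by (simp add: add_nonneg_nonneg)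
    then have "0 - a * x \<le> U * V + a * x - a * x" by (rule diff_right_mono)
    then have 2: "- (a * x) \<le> U * V" by simp
    have "labs (a * x) \<le> U * V" unfolding labs_def using 1 2 by (rule sup_least)
    also have "\<dots> \<le> m *\<^sub>R V" by (rule key[OF assms(1) assms(3) U0 V0 m0' UU])
    also have "\<dots> \<le> m *\<^sub>R (2 *\<^sub>R labs x)"
    proof (rule scaleR_left_mono)
      have l1: "x \<le> labs x" "-x \<le> labs x" unfolding labs_def by (rule sup_ge1, rule sup_ge2)
      then have "x + -x \<le> labs x + labs x" by (rule add_mono)
      then have "0 \<le> labs x + labs x" by simp
      then have "0 \<le> (1/2::real) *\<^sub>R (labs x + labs x)" by (rule scaleR_nonneg_nonneg[rotated]) simp
      then have lx: "0 \<le> labs x" unfolding scaleR_2[symmetric] scaleR_scaleR by simp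
      have "xp \<le> labs x" unfolding xp_def using l1(1) lx by (rule sup_least)
      moreover have "xn \<le> labs x" unfolding xn_def using l1(2) lx by (rule sup_least)
      ultimately show "V \<le> 2 *\<^sub>R labs x" unfolding V_def scaleR_2 by (rule add_mono)
    qed (rule m0')
    also have "\<dots> = (m * 2) *\<^sub>R labs x" by (rule scaleR_scaleR)
    finally have "labs (a * x) \<le> (m * 2) *\<^sub>R labs x" .
    moreover have "m * 2 > 0" using m0 by simp
    ultimately show "\<exists>l>0. labs (a * x) \<le> l *\<^sub>R labs x" by blast
  qed
qed
end
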